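(* Let $t$ be a prime number and $\zeta$ a primitive $t$-th root of unity, let $q\in\mathbb{C}$ with $|q|>1$, and let $\Sigma=\mathbb{Z}\oplus\mathbb{Z}/t\mathbb{Z}$ act on the ring $\mathcal M$ of meromorphic functions on $\mathbb{C}^*$, the first summand generated by $\sigma_q(f)(z)=f(qz)$ and the second by $\sigma_\zeta(f)(z)=f(\zeta z)$. Let $k$ be the field of $\sigma_q$-invariant meromorphic functions on $\mathbb{C}^*$, let $C$ be the $\Sigma_1$-closure of $k$ (where $\Sigma_1=\mathbb{Z}/t\mathbb{Z}$), and let $K$ be the total ring of fractions of the polynomial ring $C[z]$ with $\sigma_q(z)=qz$ and $\sigma_\zeta(z)=\zeta z$ (so $K$ is a Noetherian $\Sigma$-pseudofield whose $\sigma_q$-constants form the $\Sigma_1$-closed pseudofield $C$, and $k(z)$ embeds naturally in $K$). Let $R$ be a Picard-Vessiot ring over $K$ for the equation $\sigma_q(y)=-qz\cdot y$, and let $\theta_q(z)=-\sum_{n\in\mathbb{Z}}(-1)^nq^{-n(n-1)/2}z^n$ be Jacobi's theta-function (a solution of $\theta_q(qz)=-qz\cdot\theta_q(z)$). Then every relation of the form $$ \lambda_0 + \sum_{d=1}^{t-1}\lambda_{0d}\cdot\theta_q(z)^d+\lambda_{1d}\cdot\theta_q(\zeta z)^d+\ldots+\lambda_{t-1\, d}\cdot\theta_q(\zeta^{t-1}z)^d=0, $$ with $\lambda_0,\lambda_{ij}\in k(z)$, implies that $\lambda_0=\lambda_{ij}=0$.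
   Context: A $\Sigma_1$-closed (difference closed) pseudofield is an absolutely flat $\Sigma_1$-simple ring $A$ such that for every $\Sigma_1$-ideal $I$ of the difference polynomial ring $A\{y_1,\ldots,y_n\}_{\Sigma_1}$ one has $\sqrt{I}=\mathbb{I}(\mathbb{V}(I))$. A Picard-Vessiot ring for $\sigma Y=AY$ over $K$ is a $\Sigma$-simple $\Sigma$-ring containing $K$ that contains a fundamental matrix $F$ and is $\Sigma$-generated over $K$ by the entries of $F$ and $1/\det F$. *)

theory Defs
  imports "HOL-Complex_Analysis.Complex_Analysis"
begin

text \<open>Jacobi theta function: theta_q(z) = - sum over n in Z of (-1)^n q^(-n(n-1)/2) z^n,
  for z in C^* (the series converges absolutely when |q| > 1).\<close>
definition jacobi_theta :: "complex \<Rightarrow> complex \<Rightarrow> complex" where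
  "jacobi_theta q z =
     - (\<Sum>\<^sub>\<infinity>n::int. (-1) powi n * q powi (- ((n * (n - 1)) div 2)) * z powi n)"

text \<open>The field k of sigma_q-invariant meromorphic functions on C^*.
  Meromorphic functions are identified when they agree outside a discrete subset of C^*.\<close>
definition q_invariant_mero :: "complex \<Rightarrow> (complex \<Rightarrow> complex) set" where
  "q_invariant_mero q =
     {f. f meromorphic_on (-{0}) \<and> (\<forall>\<^sub>\<approx>z\<in>(-{0}). f (q * z) = f z)}"

definition in_kz :: "complex \<Rightarrow> (complex \<Rightarrow> complex) \<Rightarrow> bool" where
  "in_kz q f \<longleftrightarrow>
     (\<exists>(a :: nat \<Rightarrow> complex \<Rightarrow> complex) (b :: nat \<Rightarrow> complex \<Rightarrow> complex) (m :: nat).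
        (\<forall>i. a i \<in> q_invariant_mero q) \<and> (\<forall>i. b i \<in> q_invariant_mero q) \<and>
        \<not> (\<forall>\<^sub>\<approx>z\<in>(-{0}). (\<Sum>i\<le>m. b i z * z ^ i) = 0) \<and>
        (\<forall>\<^sub>\<approx>z\<in>(-{0}). f z = (\<Sum>i\<le>m. a i z * z ^ i) / (\<Sum>i\<le>m. b i z * z ^ i)))"

end

theory Submission
  imports Defs
begin

definition ac :: "complex \<Rightarrow> int \<Rightarrow> complex" where
  "ac q n = (-1) powi n * q powi (- ((n * (n - 1)) div 2))"

lemma ac_zero[simp]: "ac q 0 = 1"
  by (simp add: ac_def)

lemma div_aux: "((n+1)*n) div 2 = (n*(n-1)) div 2 + (n::int)"
proof -
  have "(n+1)*n = n*(n-1) + 2*n" by (simp add: algebra_simps)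
  thus ?thesis by simp
qed

lemma ac_succ:
  assumes "q \<noteq> 0"
  shows "ac q (n+1) = - ac q n * q powi (-n)"
proof -
  have "(-1::complex) powi (n+1) = - ((-1) powi n)"
    by (simp add: power_int_add)
  moreover have "q powi (- (((n+1) * (n+1-1)) div 2)) = q powi (- ((n * (n - 1)) div 2)) * q powi (-n)"
  proof -
    have "-(((n+1) * (n+1-1)) div 2) = -((n*(n-1)) div 2) + (-n)" using div_aux[of n] by simp
    thus ?thesis using assms power_int_add[of q "- ((n * (n - 1)) div 2)" "-n"] by simp
  qed
  ultimately show ?thesis by (simp add: ac_def)
qed

lemma theta_def': "jacobi_theta q z = - infsum (\<lambda>n. ac q n * z powi n) UNIV"
  by (simp add: jacobi_theta_def ac_def)

lemma theta_feq:
  assumes q: "q \<noteq> 0" and z: "z \<noteq> 0"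
  shows "jacobi_theta q (q*z) = -(q*z) * jacobi_theta q z"
proof -
  define f where "f = (\<lambda>n. ac q n * z powi n)"
  have tm: "ac q n * (q*z) powi n = -(q*z) * f (n-1)" for n
  proof -
    have "ac q n = - ac q (n-1) * q powi (-(n-1))"
      using ac_succ[OF q, of "n-1"] by simp
    moreover have "q powi (-(n-1)) * q powi n = q"
      using q by (simp add: power_int_add[symmetric])
    moreover have "z powi n = z * z powi (n-1)"
      using z by (metis add.commute diff_add_cancel power_int_add_1')
    ultimately show ?thesis
      unfolding f_def by (simp add: power_int_mult_distrib algebra_simps)
  qed
  have "infsum (\<lambda>n. f (n-1)) UNIV = infsum f UNIV"
    by (rule infsum_reindex_bij_betw) (auto simp: bij_betw_def inj_on_def image_iff intro!: exI[of _ "_+1"])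
  then show ?thesis
    unfolding theta_def' using tm
    by (simp add: infsum_cmult_right' infsum_uminus f_def)
qed

lemma theta_iter:
  assumes q: "q \<noteq> 0" and w: "w \<noteq> 0"
  shows "jacobi_theta q (q^n*w) = (-w)^n * q^(n*(n+1) div 2) * jacobi_theta q w"
proof (induction n)
  case 0 then show ?case by simp
next
  case (Suc n)
  have e: "(Suc n * (Suc n + 1)) div 2 = n*(n+1) div 2 + Suc n"
  proof -
    have "Suc n * (Suc n + 1) = n*(n+1) + 2 * Suc n" by simp
    thus ?thesis by simp
  qed
  have "jacobi_theta q (q^Suc n*w) = jacobi_theta q (q*(q^n*w))" by (simp add: mult.assoc)
  also have "\<dots> = -(q*(q^n*w)) * jacobi_theta q (q^n*w)"
    using q w by (intro theta_feq) auto
  also have "\<dots> = (-w)^Suc n * q^(Suc n*(Suc n+1) div 2) * jacobi_theta q w"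
    unfolding Suc e by (simp add: power_add algebra_simps)
  finally show ?case .
qed

lemma ratio_summable:
  fixes b :: "nat \<Rightarrow> real"
  assumes Q: "Q > 1" and b: "\<And>n. b n \<ge> 0" and rb: "\<And>n. b (Suc n) \<le> b n / Q ^ n" and r: "r \<ge> 0"
  shows "summable (\<lambda>n. b n * r ^ n)"
proof -
  obtain N where N: "2 * r < Q ^ N" using real_arch_pow[OF Q] by blast
  show ?thesis
  proof (rule summable_ratio_test[of "1/2" N])
    fix n assume n: "N \<le> n"
    have QN: "Q ^ N \<le> Q ^ n" using Q n by (simp add: power_increasing)
    have Qp: "Q ^ n > 0" using Q by simp
    have "b (Suc n) * r ^ Suc n \<le> (b n / Q ^ n) * r ^ Suc n"
      using rb r by (intro mult_right_mono) auto
    also have "\<dots> = (b n * r ^ n) * (r / Q ^ n)" by (simp add: field_simps)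
    also have "\<dots> \<le> (b n * r ^ n) * (1/2)"
    proof (intro mult_left_mono)
      show "r / Q ^ n \<le> 1/2" using N QN Qp by (simp add: field_simps)
      show "0 \<le> b n * r ^ n" using b r by simp
    qed
    finally show "norm (b (Suc n) * r ^ Suc n) \<le> 1/2 * norm (b n * r ^ n)"
      using b r by (simp add: abs_mult)
  qed simp
qed

definition GG :: "complex \<Rightarrow> nat \<Rightarrow> complex" where "GG q k = ac q (int k)"
definition HH :: "complex \<Rightarrow> nat \<Rightarrow> complex" where "HH q k = ac q (- int k - 1)"

lemma GG_ratio:
  assumes "q \<noteq> 0"
  shows "norm (GG q (Suc k)) = norm (GG q k) / norm q ^ k"
  using ac_succ[OF assms, of "int k"] assms
  by (simp add: GG_def norm_mult norm_power_int power_int_minus divide_inverse add.commute norm_inverse norm_power)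

lemma HH_ratio:
  assumes "q \<noteq> 0"
  shows "norm (HH q (Suc k)) = norm (HH q k) / norm q ^ (k+2)"
proof -
  have e1: "- int k - 2 + 1 = - int k - 1" and e2: "- (- int k - 2) = int (k + 2)" by simp_all
  have "ac q (- int k - 1) = - ac q (- int k - 2) * q powi (int (k + 2))"
    using ac_succ[OF assms, of "- int k - 2"] unfolding e1 e2 .
  hence "ac q (- int k - 1) = - ac q (- int k - 2) * q ^ (k + 2)"
    by (simp only: power_int_of_nat)
  moreover have "HH q (Suc k) = ac q (- int k - 2)" unfolding HH_def by (simp add: algebra_simps)
  ultimately have "norm (HH q k) = norm (HH q (Suc k)) * norm q ^ (k+2)"
    unfolding HH_def by (simp add: norm_mult norm_power)
  thus ?thesis using assms by (simp add: field_simps)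
qed

lemma GG_summable:
  assumes "norm q > 1" and that: "r \<ge> 0"
  shows "summable (\<lambda>n. norm (GG q n) * r ^ n)"
proof (rule ratio_summable[OF assms(1) _ _ that])
  have q: "q \<noteq> 0" using assms by auto
  show "norm (GG q (Suc n)) \<le> norm (GG q n) / norm q ^ n" for n using GG_ratio[OF q] by simp
qed simp

lemma HH_summable:
  assumes "norm q > 1" and that: "r \<ge> 0"
  shows "summable (\<lambda>n. norm (HH q n) * r ^ n)"
proof (rule ratio_summable[OF assms(1) _ _ that])
  have q: "q \<noteq> 0" using assms by auto
  show "norm (HH q (Suc n)) \<le> norm (HH q n) / norm q ^ n" for n
  proof -
    have "norm q ^ n \<le> norm q ^ (n+2)" using assms by (intro power_increasing) auto
    hence "norm (HH q n) / norm q ^ (n+2) \<le> norm (HH q n) / norm q ^ n"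
      using assms by (intro divide_left_mono) (auto intro!: mult_pos_pos zero_less_power)
    thus ?thesis using HH_ratio[OF q] by simp
  qed
qed simp

definition gf :: "complex \<Rightarrow> complex \<Rightarrow> complex" where "gf q = eval_fps (Abs_fps (GG q))"
definition hf :: "complex \<Rightarrow> complex \<Rightarrow> complex" where "hf q = eval_fps (Abs_fps (HH q))"

lemma GG_radius:
  assumes "norm q > 1"
  shows "fps_conv_radius (Abs_fps (GG q)) = \<infinity>"
  unfolding fps_conv_radius_def fps_nth_Abs_fps
proof (rule conv_radius_inftyI'[of 0])
  fix r :: real assume r: "r > 0"
  have "summable (\<lambda>n. norm (GG q n * of_real r ^ n))"
    using GG_summable[OF assms, of r] r by (simp add: norm_mult norm_power)
  thus "\<exists>z. norm z = r \<and> summable (\<lambda>n. GG q n * z ^ n)"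
    using r by (intro exI[of _ "of_real r"]) (auto intro: summable_norm_cancel)
qed

lemma HH_radius:
  assumes "norm q > 1"
  shows "fps_conv_radius (Abs_fps (HH q)) = \<infinity>"
  unfolding fps_conv_radius_def fps_nth_Abs_fps
proof (rule conv_radius_inftyI'[of 0])
  fix r :: real assume r: "r > 0"
  have "summable (\<lambda>n. norm (HH q n * of_real r ^ n))"
    using HH_summable[OF assms, of r] r by (simp add: norm_mult norm_power)
  thus "\<exists>z. norm z = r \<and> summable (\<lambda>n. HH q n * z ^ n)"
    using r by (intro exI[of _ "of_real r"]) (auto intro: summable_norm_cancel)
qed

lemma gf_holo: "norm q > 1 \<Longrightarrow> gf q holomorphic_on A"
  unfolding gf_def by (intro holomorphic_on_eval_fps) (simp add: GG_radius)

lemma hf_holo: "norm q > 1 \<Longrightarrow> hf q holomorphic_on A"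
  unfolding hf_def by (intro holomorphic_on_eval_fps) (simp add: HH_radius)

lemma theta_decomp:
  assumes q: "norm q > 1" and z: "z \<noteq> 0"
  shows "jacobi_theta q z = - (gf q z + (1/z) * hf q (1/z))"
proof -
  define f where "f = (\<lambda>n. ac q n * z powi n)"
  have hasG: "((\<lambda>k. f (int k)) has_sum gf q z) UNIV"
  proof -
    have eq: "(\<lambda>k. f (int k)) = (\<lambda>k. GG q k * z ^ k)" by (auto simp: f_def GG_def)
    have "summable (\<lambda>k. norm (GG q k * z ^ k))"
      using GG_summable[OF q, of "norm z"] by (simp add: norm_mult norm_power)
    moreover have "(\<lambda>k. GG q k * z ^ k) sums gf q z"
      unfolding gf_def using sums_eval_fps[of z "Abs_fps (GG q)"] GG_radius[OF q] by simp
    ultimately show ?thesis unfolding eq by (rule norm_summable_imp_has_sum)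
  qed
  have hasH: "((\<lambda>k. f (- int k - 1)) has_sum ((1/z) * hf q (1/z))) UNIV"
  proof -
    have eq: "(\<lambda>k. f (- int k - 1)) = (\<lambda>k. (1/z) * (HH q k * (1/z) ^ k))"
    proof
      fix k
      have "z powi (- int k - 1) = (1/z) * (1/z) ^ k"
        using z by (simp add: power_int_diff power_int_minus field_simps)
      thus "f (- int k - 1) = (1/z) * (HH q k * (1/z) ^ k)" by (simp add: f_def HH_def)
    qed
    have "summable (\<lambda>k. norm (HH q k * (1/z) ^ k))"
      using HH_summable[OF q, of "norm (1/z)"] by (simp add: norm_mult norm_power)
    moreover have "(\<lambda>k. HH q k * (1/z) ^ k) sums hf q (1/z)"
      unfolding hf_def using sums_eval_fps[of "1/z" "Abs_fps (HH q)"] HH_radius[OF q] by simp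
    ultimately have "((\<lambda>k. HH q k * (1/z) ^ k) has_sum hf q (1/z)) UNIV" by (rule norm_summable_imp_has_sum)
    thus ?thesis unfolding eq by (rule has_sum_cmult_right)
  qed
  have A: "(f has_sum gf q z) (range int)"
    using hasG by (subst has_sum_reindex) (auto simp: o_def)
  have B: "(f has_sum ((1/z) * hf q (1/z))) (range (\<lambda>k. - int k - 1))"
    using hasH by (subst has_sum_reindex) (auto simp: o_def inj_on_def)
  have U: "range int \<union> range (\<lambda>k. - int k - 1) = UNIV"
  proof -
    have "n \<in> range int \<union> range (\<lambda>k. - int k - 1)" for n :: int
    proof (cases "n \<ge> 0")
      case True then show ?thesis by (auto intro!: image_eqI[of _ _ "nat n"])
    next
      case False then show ?thesis by (auto intro!: image_eqI[of _ _ "nat (- n - 1)"])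
    qed
    thus ?thesis by auto
  qed
  have D: "range int \<inter> range (\<lambda>k. - int k - 1) = {}" by auto
  have "(f has_sum (gf q z + (1/z) * hf q (1/z))) UNIV"
    using has_sum_Un_disjoint[OF A B D] unfolding U .
  hence "infsum f UNIV = gf q z + (1/z) * hf q (1/z)" by (rule infsumI)
  thus ?thesis unfolding theta_def' f_def by simp
qed

lemma open_U: "open (-{0::complex})" by auto
lemma connected_U: "connected (-{0::complex})"
  by (rule connected_punctured_universe) simp

lemma theta_holo:
  assumes q: "norm q > 1"
  shows "jacobi_theta q holomorphic_on (-{0})"
proof -
  have h1: "(\<lambda>z::complex. 1/z) holomorphic_on (-{0})" by (intro holomorphic_intros) auto
  have "(hf q \<circ> (\<lambda>z. 1/z)) holomorphic_on (-{0})"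
    by (rule holomorphic_on_compose[OF h1 hf_holo[OF q]])
  hence h2: "(\<lambda>z. hf q (1/z)) holomorphic_on (-{0})" by (simp add: o_def)
  have "(\<lambda>z. - (gf q z + (1/z) * hf q (1/z))) holomorphic_on (-{0})"
    by (intro holomorphic_intros gf_holo[OF q] h2) auto
  moreover have "\<And>z. z \<in> -{0} \<Longrightarrow> jacobi_theta q z = - (gf q z + (1/z) * hf q (1/z))"
    using theta_decomp[OF q] by auto
  ultimately show ?thesis
    using holomorphic_cong[of "-{0}" "-{0}" "jacobi_theta q"] by auto
qed

lemma theta_mero:
  assumes q: "norm q > 1"
  shows "jacobi_theta q meromorphic_on (-{0})"
  using theta_holo[OF q] by (intro analytic_on_imp_meromorphic_on) (simp add: analytic_on_open[OF open_U])

lemma theta_not_ae0: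
  assumes q: "norm q > 1"
  shows "\<not> (\<forall>\<^sub>\<approx>z\<in>(-{0}). jacobi_theta q z = 0)"
proof
  assume ae: "\<forall>\<^sub>\<approx>z\<in>(-{0}). jacobi_theta q z = 0"
  have zero: "jacobi_theta q x = 0" if x: "x \<noteq> 0" for x
  proof -
    have ev: "eventually (\<lambda>z. jacobi_theta q z = 0) (at x)"
      using eventually_cosparse_imp_eventually_at[OF ae, of x UNIV] x by simp
    have "continuous_on (-{0}) (jacobi_theta q)"
      using theta_holo[OF q] by (rule holomorphic_on_imp_continuous_on)
    hence "isCont (jacobi_theta q) x"
      using x open_U continuous_on_eq_continuous_at by blast
    hence l1: "(jacobi_theta q \<longlongrightarrow> jacobi_theta q x) (at x)" by (simp add: isCont_def)
    have l2: "(jacobi_theta q \<longlongrightarrow> 0) (at x)" using ev by (rule tendsto_eventually)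
    show ?thesis using tendsto_unique[OF _ l1 l2] by simp
  qed
  have geq: "gf q z = - ((1/z) * hf q (1/z))" if "z \<noteq> 0" for z
  proof -
    have "- (gf q z + (1/z) * hf q (1/z)) = 0"
      by (rule trans[OF sym[OF theta_decomp[OF q that]] zero[OF that]])
    hence "gf q z + (1/z) * hf q (1/z) = 0" by (simp only: neg_equal_0_iff_equal)
    thus ?thesis by (simp add: eq_neg_iff_add_eq_0)
  qed
  have "isCont (hf q) 0"
    using hf_holo[OF q, of UNIV] holomorphic_on_imp_continuous_on continuous_on_eq_continuous_at by blast
  moreover have "((\<lambda>z::complex. 1/z) \<longlongrightarrow> 0) at_infinity"
    using tendsto_inverse_0 by (simp add: inverse_eq_divide[symmetric])
  ultimately have "((\<lambda>z. hf q (1/z)) \<longlongrightarrow> hf q 0) at_infinity"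
    by (rule isCont_tendsto_compose)
  hence "((\<lambda>z::complex. - ((1/z) * hf q (1/z))) \<longlongrightarrow> - (0 * hf q 0)) at_infinity"
    by (intro tendsto_intros) (use \<open>((\<lambda>z::complex. 1/z) \<longlongrightarrow> 0) at_infinity\<close> in auto)
  hence lim0: "((\<lambda>z::complex. - ((1/z) * hf q (1/z))) \<longlongrightarrow> 0) at_infinity" by simp
  have "eventually (\<lambda>z::complex. z \<noteq> 0) at_infinity"
    unfolding eventually_at_infinity by (rule exI[of _ 1]) auto
  hence "eventually (\<lambda>z. - ((1/z) * hf q (1/z)) = gf q z) at_infinity"
    by eventually_elim (simp add: geq)
  hence "(gf q \<longlongrightarrow> 0) at_infinity" by (rule tendsto_cong[THEN iffD1, OF _ lim0])
  hence "gf q 0 = 0" by (intro Liouville_weak_0 gf_holo[OF q])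
  moreover have "gf q 0 = 1" by (simp add: gf_def eval_fps_at_0 GG_def)
  ultimately show False by simp
qed

lemma theta_ae_nonzero:
  assumes q: "norm q > 1"
  shows "\<forall>\<^sub>\<approx>z\<in>(-{0}). jacobi_theta q z \<noteq> 0"
  using meromorphic_imp_constant_or_avoid[OF theta_mero[OF q] open_U connected_U, of 0]
    theta_not_ae0[OF q] by blast

definition TT :: "nat \<Rightarrow> nat" where "TT n = n * (n + 1) div 2"

lemma TT_Suc: "TT (Suc n) = TT n + Suc n"
proof -
  have "Suc n * (Suc n + 1) = n * (n + 1) + 2 * Suc n" by simp
  thus ?thesis unfolding TT_def by simp
qed

lemma decay_real:
  fixes Q R :: real
  assumes Q: "Q > 1" and R: "R \<ge> 0"
  shows "(\<lambda>n. R ^ n / Q ^ TT n) \<longlonglongrightarrow> 0"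
proof -
  have "summable (\<lambda>n. (1 / Q ^ TT n) * R ^ n)"
  proof (rule ratio_summable[OF Q _ _ R])
    fix n
    have "1 / Q ^ TT (Suc n) = (1 / Q ^ TT n) / Q ^ Suc n"
      by (simp add: TT_Suc power_add)
    also have "\<dots> \<le> (1 / Q ^ TT n) / Q ^ n"
      using Q by (intro divide_left_mono) (auto intro!: power_increasing mult_pos_pos)
    finally show "1 / Q ^ TT (Suc n) \<le> (1 / Q ^ TT n) / Q ^ n" .
  qed (use Q in auto)
  from summable_LIMSEQ_zero[OF this] show ?thesis by simp
qed

lemma decay:
  fixes q r :: complex
  assumes q: "norm q > 1" and e: "e \<ge> 1"
  shows "(\<lambda>n. r ^ n / q ^ (e * TT n)) \<longlonglongrightarrow> 0"
proof (rule Lim_null_comparison[OF _ decay_real[OF q, of "norm r"]])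
  show "\<forall>\<^sub>F n in sequentially. norm (r ^ n / q ^ (e * TT n)) \<le> norm r ^ n / norm q ^ TT n"
  proof (intro always_eventually allI)
    fix n
    have "norm q ^ TT n \<le> norm q ^ (e * TT n)"
      using q e by (intro power_increasing) auto
    thus "norm (r ^ n / q ^ (e * TT n)) \<le> norm r ^ n / norm q ^ TT n"
      using q by (auto simp: norm_divide norm_power intro!: divide_left_mono mult_pos_pos zero_less_power)
  qed
qed simp

lemma poly_decay:
  fixes q w :: complex
  assumes q: "norm q > 1" and e: "e \<ge> 1"
  shows "(\<lambda>n. poly p (q ^ n) * w ^ n / q ^ (e * TT n)) \<longlonglongrightarrow> 0"
proof -
  have eq: "poly p (q ^ n) * w ^ n / q ^ (e * TT n) =
            (\<Sum>m\<le>degree p. coeff p m * ((q ^ m * w) ^ n / q ^ (e * TT n)))" for n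
  proof -
    have pw: "(q ^ n) ^ m = (q ^ m) ^ n" for m by (simp add: power_mult[symmetric] mult.commute)
    show ?thesis unfolding poly_altdef sum_distrib_right sum_divide_distrib
      by (intro sum.cong refl) (simp add: pw power_mult_distrib)
  qed
  show ?thesis unfolding eq
    by (intro tendsto_null_sum tendsto_mult_right_zero decay[OF q e])
qed

lemma periodic_zero:
  fixes G :: "nat \<Rightarrow> complex"
  assumes t: "t > 0" and per: "\<And>n. G (n + t) = G n" and lim: "G \<longlonglongrightarrow> 0"
  shows "G n = 0"
proof -
  have eq: "G (n + t * k) = G n" for k
  proof (induction k)
    case (Suc k)
    have "n + t * Suc k = (n + t * k) + t" by simp
    thus ?case using per[of "n + t * k"] Suc by (simp only:)
  qed simp
  have "strict_mono (\<lambda>k. n + t * k)" using t by (auto simp: strict_mono_def)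
  from LIMSEQ_subseq_LIMSEQ[OF lim this] have "(\<lambda>k. G n) \<longlonglongrightarrow> 0"
    by (simp add: o_def eq)
  thus ?thesis by (simp add: LIMSEQ_const_iff)
qed

lemma top_zero:
  fixes q :: complex and \<xi> :: "nat \<Rightarrow> complex" and c :: "nat \<Rightarrow> nat \<Rightarrow> complex"
  assumes q: "norm q > 1" and t: "t > 0"
    and xi: "\<And>i. i < s \<Longrightarrow> \<xi> i ^ t = 1"
    and orth: "\<And>c. (\<And>r. r < t \<Longrightarrow> (\<Sum>i<s. c i * \<xi> i ^ r) = 0) \<Longrightarrow> \<forall>i<s. c i = 0"
    and lim: "(\<lambda>n. \<Sum>i<s. \<Sum>m\<le>N. c i m * (q ^ m * \<xi> i) ^ n) \<longlonglongrightarrow> 0"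
  shows "\<forall>i<s. c i N = 0"
proof -
  have nxi: "norm (\<xi> i) = 1" if "i < s" for i
  proof -
    have "norm (\<xi> i) ^ t = 1" using xi[OF that] by (metis norm_one norm_power)
    thus ?thesis using power_eq_iff_eq_base[of t "norm (\<xi> i)" 1] t by simp
  qed
  have qN: "norm (q ^ N) \<ge> 1" using q by (simp add: norm_power)
  define S where "S n = (\<Sum>i<s. \<Sum>m\<le>N. c i m * (q ^ m * \<xi> i) ^ n)" for n
  define G where "G n = (\<Sum>i<s. c i N * \<xi> i ^ n)" for n
  define Rs where "Rs n = (\<Sum>i<s. \<Sum>m<N. c i m * ((q ^ m / q ^ N) * \<xi> i) ^ n)" for n
  have W: "(\<lambda>n. S n / (q ^ N) ^ n) \<longlonglongrightarrow> 0"
  proof (rule Lim_null_comparison[OF _ tendsto_norm_zero[OF lim[folded S_def]]])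
    show "\<forall>\<^sub>F n in sequentially. norm (S n / (q ^ N) ^ n) \<le> norm (S n)"
    proof (intro always_eventually allI)
      fix n
      have "1 \<le> norm ((q ^ N) ^ n)" using qN by (simp add: norm_power one_le_power)
      thus "norm (S n / (q ^ N) ^ n) \<le> norm (S n)"
        by (simp add: norm_divide divide_le_eq) (simp add: mult_le_cancel_left1 order_trans)
    qed
  qed
  have qn0: "q \<noteq> 0" using q by auto
  have split: "S n / (q ^ N) ^ n = G n + Rs n" for n
  proof -
    have "S n = (\<Sum>i<s. c i N * (q ^ N * \<xi> i) ^ n + (\<Sum>m<N. c i m * (q ^ m * \<xi> i) ^ n))"
      unfolding S_def by (simp add: lessThan_Suc_atMost[symmetric] add.commute)
    hence "S n / (q ^ N) ^ n = (\<Sum>i<s. (c i N * (q ^ N * \<xi> i) ^ n + (\<Sum>m<N. c i m * (q ^ m * \<xi> i) ^ n)) / (q ^ N) ^ n)"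
      by (simp only: sum_divide_distrib)
    also have "\<dots> = (\<Sum>i<s. c i N * \<xi> i ^ n + (\<Sum>m<N. c i m * ((q ^ m / q ^ N) * \<xi> i) ^ n))"
    proof (intro sum.cong refl)
      fix i
      have "(\<Sum>m<N. c i m * (q ^ m * \<xi> i) ^ n) / (q ^ N) ^ n = (\<Sum>m<N. c i m * ((q ^ m / q ^ N) * \<xi> i) ^ n)"
        unfolding sum_divide_distrib using qn0 by (intro sum.cong refl) (simp add: power_mult_distrib power_divide)
      moreover have "c i N * (q ^ N * \<xi> i) ^ n / (q ^ N) ^ n = c i N * \<xi> i ^ n"
        using qn0 by (simp add: power_mult_distrib)
      ultimately show "(c i N * (q ^ N * \<xi> i) ^ n + (\<Sum>m<N. c i m * (q ^ m * \<xi> i) ^ n)) / (q ^ N) ^ n =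
          c i N * \<xi> i ^ n + (\<Sum>m<N. c i m * ((q ^ m / q ^ N) * \<xi> i) ^ n)"
        by (simp add: add_divide_distrib)
    qed
    finally have "S n / (q ^ N) ^ n = (\<Sum>i<s. c i N * \<xi> i ^ n + (\<Sum>m<N. c i m * ((q ^ m / q ^ N) * \<xi> i) ^ n))" .
    thus ?thesis unfolding G_def Rs_def by (simp add: sum.distrib)
  qed
  have Rlim: "Rs \<longlonglongrightarrow> 0"
    unfolding Rs_def
  proof (intro tendsto_null_sum tendsto_mult_right_zero LIMSEQ_power_zero)
    fix i m assume i: "i \<in> {..<s}" and m: "m \<in> {..<N}"
    have lt: "norm q ^ m < norm q ^ N" using q m by (intro power_strict_increasing) auto
    have pos: "norm q ^ N > 0" using q by (intro zero_less_power) linarith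
    show "norm (q ^ m / q ^ N * \<xi> i) < 1"
      using nxi[of i] i lt pos by (simp add: norm_mult norm_divide norm_power divide_less_eq)
  qed
  have "(\<lambda>n. (G n + Rs n) - Rs n) \<longlonglongrightarrow> 0 - 0"
    using W unfolding split by (intro tendsto_diff Rlim)
  hence Glim: "G \<longlonglongrightarrow> 0" by simp
  have per: "G (n + t) = G n" for n
    unfolding G_def by (intro sum.cong refl) (simp add: power_add xi)
  have "\<forall>i<s. c i N = 0"
  proof (rule orth)
    fix r assume "r < t"
    show "(\<Sum>i<s. c i N * \<xi> i ^ r) = 0" using periodic_zero[OF t per Glim, of r] by (simp add: G_def)
  qed
  thus ?thesis .
qed

lemma all_zero:
  fixes q :: complex and \<xi> :: "nat \<Rightarrow> complex" and c :: "nat \<Rightarrow> nat \<Rightarrow> complex"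
  assumes q: "norm q > 1" and t: "t > 0"
    and xi: "\<And>i. i < s \<Longrightarrow> \<xi> i ^ t = 1"
    and orth: "\<And>c. (\<And>r. r < t \<Longrightarrow> (\<Sum>i<s. c i * \<xi> i ^ r) = 0) \<Longrightarrow> \<forall>i<s. c i = 0"
  shows "(\<lambda>n. \<Sum>i<s. \<Sum>m\<le>N. c i m * (q ^ m * \<xi> i) ^ n) \<longlonglongrightarrow> 0 \<Longrightarrow> \<forall>i<s. \<forall>m\<le>N. c i m = 0"
proof (induction N)
  case 0
  then show ?case using top_zero[where q=q and t=t and s=s and \<xi>=\<xi> and c=c and N=0, OF q t xi orth] by auto
next
  case (Suc N)
  have top: "\<forall>i<s. c i (Suc N) = 0" using top_zero[where q=q and t=t and s=s and \<xi>=\<xi> and c=c and N="Suc N", OF q t xi orth Suc.prems] by blast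
  have "(\<lambda>n. \<Sum>i<s. \<Sum>m\<le>Suc N. c i m * (q ^ m * \<xi> i) ^ n) = (\<lambda>n. \<Sum>i<s. \<Sum>m\<le>N. c i m * (q ^ m * \<xi> i) ^ n)"
  proof (rule ext, rule sum.cong[OF refl])
    fix n i assume "i \<in> {..<s}"
    hence "c i (Suc N) = 0" using top by simp
    thus "(\<Sum>m\<le>Suc N. c i m * (q ^ m * \<xi> i) ^ n) = (\<Sum>m\<le>N. c i m * (q ^ m * \<xi> i) ^ n)"
      by (simp add: atMost_Suc)
  qed
  with Suc.prems have "\<forall>i<s. \<forall>m\<le>N. c i m = 0" using Suc.IH by simp
  with top show ?case using le_Suc_eq by auto
qed

lemma poly_zero:
  fixes q :: complex and \<xi> :: "nat \<Rightarrow> complex" and p :: "nat \<Rightarrow> complex poly"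
  assumes q: "norm q > 1" and t: "t > 0"
    and xi: "\<And>i. i < s \<Longrightarrow> \<xi> i ^ t = 1"
    and orth: "\<And>c. (\<And>r. r < t \<Longrightarrow> (\<Sum>i<s. c i * \<xi> i ^ r) = 0) \<Longrightarrow> \<forall>i<s. c i = 0"
    and lim: "(\<lambda>n. \<Sum>i<s. poly (p i) (q ^ n) * \<xi> i ^ n) \<longlonglongrightarrow> 0"
  shows "\<forall>i<s. p i = 0"
proof -
  define N where "N = (\<Sum>i<s. degree (p i))"
  have deg: "degree (p i) \<le> N" if "i < s" for i
    unfolding N_def using that by (intro member_le_sum) auto
  have pw: "(q ^ n) ^ m = (q ^ m) ^ n" for m n by (simp add: power_mult[symmetric] mult.commute)
  have eq: "poly (p i) (q ^ n) * \<xi> i ^ n = (\<Sum>m\<le>N. coeff (p i) m * (q ^ m * \<xi> i) ^ n)" if "i < s" for i n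
  proof -
    have "poly (p i) (q ^ n) = poly (\<Sum>m\<le>N. monom (coeff (p i) m) m) (q ^ n)"
      using poly_as_sum_of_monoms'[OF deg[OF that]] by simp
    also have "\<dots> = (\<Sum>m\<le>N. coeff (p i) m * (q ^ m) ^ n)"
      by (simp add: poly_sum poly_monom pw)
    finally show ?thesis by (simp add: sum_distrib_right power_mult_distrib mult.assoc)
  qed
  have "(\<lambda>n. \<Sum>i<s. \<Sum>m\<le>N. coeff (p i) m * (q ^ m * \<xi> i) ^ n) \<longlonglongrightarrow> 0"
    using lim by (subst (asm) sum.cong[OF refl eq]) auto
  note AZ = all_zero[where q=q and t=t and s=s and \<xi>=\<xi> and c="\<lambda>i m. coeff (p i) m" and N=N, OF q t xi]
  have z: "\<forall>i<s. \<forall>m\<le>N. coeff (p i) m = 0"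
    apply (rule AZ)
      apply simp
     apply (rule orth, assumption)
    apply fact
    done
  show ?thesis
  proof (intro allI impI)
    fix i assume i: "i < s"
    show "p i = 0"
    proof (rule poly_eqI)
      fix m
      show "coeff (p i) m = coeff 0 m"
      proof (cases "m \<le> N")
        case True then show ?thesis using z i by simp
      next
        case False then show ?thesis using deg[OF i] by (simp add: coeff_eq_0)
      qed
    qed
  qed
qed

lemma zeta_pow_one:
  fixes \<zeta> :: complex
  assumes t: "t > 0" and z1: "\<zeta> ^ t = 1" and prim: "\<forall>j. 0 < j \<and> j < t \<longrightarrow> \<zeta> ^ j \<noteq> 1"
  shows "\<zeta> ^ a = 1 \<longleftrightarrow> t dvd a"
proof -
  have "\<zeta> ^ a = (\<zeta> ^ t) ^ (a div t) * \<zeta> ^ (a mod t)"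
    by (simp add: power_mult[symmetric] power_add[symmetric])
  hence e: "\<zeta> ^ a = \<zeta> ^ (a mod t)" using z1 by simp
  have "a mod t < t" using t by simp
  thus ?thesis unfolding e using prim by (cases "a mod t = 0") (auto simp: dvd_eq_mod_eq_0)
qed

lemma orth_zeta:
  fixes \<zeta> :: complex and c :: "nat \<Rightarrow> complex"
  assumes t: "prime t" and z1: "\<zeta> ^ t = 1" and prim: "\<forall>j. 0 < j \<and> j < t \<longrightarrow> \<zeta> ^ j \<noteq> 1"
    and d: "0 < d" "d < t"
    and h: "\<And>r. r < t \<Longrightarrow> (\<Sum>i<t. c i * (\<zeta> ^ (i * d)) ^ r) = 0"
  shows "\<forall>i<t. c i = 0"
proof (intro allI impI)
  fix j assume j: "j < t"
  have t0: "t > 0" using t prime_gt_0_nat by blast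
  have om: "(\<Sum>r<t. (\<zeta> ^ ((t - j + i) * d)) ^ r) = (if i = j then of_nat t else 0)" if i: "i < t" for i
  proof (cases "i = j")
    case True
    have "t - j + i = t" using True j by simp
    hence "\<zeta> ^ ((t - j + i) * d) = 1" using z1 by (simp add: power_mult)
    then show ?thesis using True by simp
  next
    case False
    have "\<not> t dvd (t - j + i) * d"
    proof
      assume "t dvd (t - j + i) * d"
      hence "t dvd (t - j + i) \<or> t dvd d" using t prime_dvd_mult_iff by blast
      moreover have "\<not> t dvd d" using d by (auto dest: dvd_imp_le)
      moreover have "0 < t - j + i" "t - j + i < 2 * t" "t - j + i \<noteq> t" using i j False by auto
      ultimately have dv: "t dvd (t - j + i)" by blast
      then obtain k where k: "t - j + i = t * k" by (elim dvdE)
      show False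
      proof (cases k)
        case 0 then show ?thesis using k \<open>0 < t - j + i\<close> by simp
      next
        case (Suc k')
        show ?thesis
        proof (cases k')
          case 0 then show ?thesis using k Suc \<open>t - j + i \<noteq> t\<close> by simp
        next
          case (Suc k'')
          have "t * k \<ge> 2 * t" using \<open>k = Suc k'\<close> Suc by simp
          then show ?thesis using k \<open>t - j + i < 2 * t\<close> by simp
        qed
      qed
    qed
    hence ne: "\<zeta> ^ ((t - j + i) * d) \<noteq> 1" using zeta_pow_one[OF t0 z1 prim] by blast
    have "(\<zeta> ^ ((t - j + i) * d)) ^ t = 1"
      using z1 by (metis mult.commute power_mult power_one)
    then show ?thesis using ne False by (simp add: sum_gp_strict)
  qed
  have "0 = (\<Sum>r<t. \<zeta> ^ ((t - j) * d * r) * (\<Sum>i<t. c i * (\<zeta> ^ (i * d)) ^ r))"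
    using h by simp
  also have "\<dots> = (\<Sum>r<t. \<Sum>i<t. c i * (\<zeta> ^ ((t - j + i) * d)) ^ r)"
  proof (intro sum.cong refl)
    fix r
    have pt: "\<zeta> ^ ((t - j) * d * r) * (\<zeta> ^ (i * d)) ^ r = (\<zeta> ^ ((t - j + i) * d)) ^ r" for i
    proof -
      have e: "(t - j) * d * r + i * d * r = (t - j + i) * d * r" by (simp add: add_mult_distrib)
      have "\<zeta> ^ ((t - j) * d * r) * (\<zeta> ^ (i * d)) ^ r = \<zeta> ^ ((t - j) * d * r) * \<zeta> ^ (i * d * r)"
        by (simp only: power_mult)
      also have "\<dots> = \<zeta> ^ ((t - j) * d * r + i * d * r)" by (simp only: power_add)
      also have "\<dots> = \<zeta> ^ ((t - j + i) * d * r)" by (simp only: e)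
      also have "\<dots> = (\<zeta> ^ ((t - j + i) * d)) ^ r" by (simp only: power_mult)
      finally show ?thesis .
    qed
    show "\<zeta> ^ ((t - j) * d * r) * (\<Sum>i<t. c i * (\<zeta> ^ (i * d)) ^ r) = (\<Sum>i<t. c i * (\<zeta> ^ ((t - j + i) * d)) ^ r)"
      unfolding sum_distrib_left by (intro sum.cong refl) (subst pt[symmetric], simp only: mult.left_commute)
  qed
  also have "\<dots> = (\<Sum>i<t. c i * (\<Sum>r<t. (\<zeta> ^ ((t - j + i) * d)) ^ r))"
    by (subst sum.swap) (simp add: sum_distrib_left)
  also have "\<dots> = (\<Sum>i<t. if i = j then c i * of_nat t else 0)"
    by (intro sum.cong refl) (simp add: om)
  also have "\<dots> = c j * of_nat t" using j by simp
  finally show "c j = 0" using t0 by simp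
qed

lemma core:
  fixes q z \<zeta> :: complex and t :: nat and p :: "nat \<Rightarrow> nat \<Rightarrow> complex poly"
  assumes q: "norm q > 1" and z: "z \<noteq> 0" and t: "prime t"
    and z1: "\<zeta> ^ t = 1" and prim: "\<forall>j. 0 < j \<and> j < t \<longrightarrow> \<zeta> ^ j \<noteq> 1"
    and p0: "\<And>i. 0 < i \<Longrightarrow> p i 0 = 0"
    and hyp: "\<And>n. (\<Sum>d<t. \<Sum>i<t. poly (p i d) (q ^ n) * (\<zeta> ^ (i * d)) ^ n * ((- z) ^ d) ^ n * q ^ (d * TT n)) = 0"
  shows "\<forall>d<t. \<forall>i<t. p i d = 0"
proof (rule ccontr)
  assume nz: "\<not> (\<forall>d<t. \<forall>i<t. p i d = 0)"
  have t0: "t > 0" using t prime_gt_0_nat by blast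
  have q0: "q \<noteq> 0" using q by auto
  define A where "A = {d. d < t \<and> (\<exists>i<t. p i d \<noteq> 0)}"
  have finA: "finite A" unfolding A_def by auto
  have neA: "A \<noteq> {}" using nz unfolding A_def by auto
  define D where "D = Max A"
  have DA: "D \<in> A" unfolding D_def using finA neA by (rule Max_in)
  have Dmax: "d \<le> D" if "d \<in> A" for d unfolding D_def using finA that by simp
  have Dt: "D < t" using DA unfolding A_def by simp
  define F where "F d n = (\<Sum>i<t. poly (p i d) (q ^ n) * (\<zeta> ^ (i * d)) ^ n)" for d n
  define X where "X d n = ((- z) ^ d) ^ n * q ^ (d * TT n)" for d n
  have X0: "X d n \<noteq> 0" for d n using z q0 unfolding X_def by simp
  have hyp': "(\<Sum>d<t. F d n * X d n) = 0" for n
    using hyp[of n] unfolding F_def X_def by (simp add: sum_distrib_right mult.assoc)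
  have Fz: "F d n = 0" if "D < d" "d < t" for d n
  proof -
    have "d \<notin> A" using Dmax that by force
    hence "\<forall>i<t. p i d = 0" using that unfolding A_def by auto
    thus ?thesis unfolding F_def by simp
  qed
  have "(\<Sum>d<t. F d n * X d n) = (\<Sum>d\<le>D. F d n * X d n)" for n
    by (rule sum.mono_neutral_right) (use Dt Fz in auto)
  hence "(\<Sum>d\<le>D. F d n * X d n) = 0" for n using hyp' by simp
  hence "F D n * X D n + (\<Sum>d<D. F d n * X d n) = 0" for n
    by (simp add: lessThan_Suc_atMost[symmetric] add.commute)
  hence FD: "F D n = - (\<Sum>d<D. F d n * X d n / X D n)" for n
    using X0[of D n] by (simp add: sum_divide_distrib[symmetric] eq_neg_iff_add_eq_0 field_simps)
  have lim: "F D \<longlonglongrightarrow> 0"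
  proof -
    have "(\<lambda>n. \<Sum>d<D. F d n * X d n / X D n) \<longlonglongrightarrow> 0"
    proof (rule tendsto_null_sum)
      fix d assume d: "d \<in> {..<D}"
      have eq: "F d n * X d n / X D n =
          (\<Sum>i<t. poly (p i d) (q ^ n) * (\<zeta> ^ (i * d) * ((- z) ^ d / (- z) ^ D)) ^ n / q ^ ((D - d) * TT n))" for n
      proof -
        have qD: "q ^ (D * TT n) = q ^ ((D - d) * TT n) * q ^ (d * TT n)"
        proof -
          have "D * TT n = (D - d) * TT n + d * TT n" using d by (simp add: add_mult_distrib[symmetric])
          thus ?thesis by (simp add: power_add)
        qed
        have "X d n / X D n = ((- z) ^ d / (- z) ^ D) ^ n / q ^ ((D - d) * TT n)"
          unfolding X_def qD using z q0 by (simp add: power_divide field_simps)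
        hence "F d n * X d n / X D n = F d n * (((- z) ^ d / (- z) ^ D) ^ n / q ^ ((D - d) * TT n))"
          by (simp only: times_divide_eq_right[symmetric] mult.assoc)
        also have "\<dots> = (\<Sum>i<t. poly (p i d) (q ^ n) * (\<zeta> ^ (i * d)) ^ n * (((- z) ^ d / (- z) ^ D) ^ n / q ^ ((D - d) * TT n)))"
          unfolding F_def sum_distrib_right ..
        also have "\<dots> = (\<Sum>i<t. poly (p i d) (q ^ n) * (\<zeta> ^ (i * d) * ((- z) ^ d / (- z) ^ D)) ^ n / q ^ ((D - d) * TT n))"
          by (intro sum.cong refl) (simp add: power_mult_distrib power_divide)
        finally show ?thesis .
      qed
      show "(\<lambda>n. F d n * X d n / X D n) \<longlonglongrightarrow> 0"
        unfolding eq using d by (intro tendsto_null_sum poly_decay[OF q]) auto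
    qed
    from tendsto_minus[OF this] show ?thesis unfolding FD[abs_def] by simp
  qed
  show False
  proof (cases "D = 0")
    case False
    have xi: "(\<zeta> ^ (i * D)) ^ t = 1" for i using z1 by (metis mult.commute power_mult power_one)
    have "\<forall>i<t. p i D = 0"
      apply (rule poly_zero[where q=q and t=t and s=t and \<xi>="\<lambda>i. \<zeta> ^ (i * D)" and p="\<lambda>i. p i D"])
          apply (rule q)
         apply (rule t0)
        apply (rule xi)
       apply (rule orth_zeta[OF t z1 prim _ Dt], use False in simp, assumption)
      using lim unfolding F_def by simp
    thus False using DA unfolding A_def by auto
  next
    case True
    have "F 0 n = poly (p 0 0) (q ^ n)" for n
    proof -
      have "F 0 n = (\<Sum>i<t. poly (p i 0) (q ^ n))" unfolding F_def by simp
      also have "\<dots> = (\<Sum>i\<in>{0}. poly (p i 0) (q ^ n))"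
        by (rule sum.mono_neutral_right) (use t0 p0 in auto)
      finally show ?thesis by simp
    qed
    hence "F 0 = (\<lambda>n. poly (p 0 0) (q ^ n))" by (intro ext)
    hence "(\<lambda>n. \<Sum>i<1. poly (p i 0) (q ^ n) * 1 ^ n) \<longlonglongrightarrow> 0" using lim True by simp
    have "\<forall>i<1. p i 0 = 0"
      apply (rule poly_zero[where q=q and t=1 and s=1 and \<xi>="\<lambda>i. 1" and p="\<lambda>i. p i 0"])
          apply (rule q)
         apply simp
        apply simp
       apply simp
      by fact
    hence "\<forall>i<t. p i 0 = 0" using p0 by (metis less_one neq0_conv)
    thus False using DA True unfolding A_def by auto
  qed
qed

lemma theta_pow_iter:
  assumes q: "q \<noteq> 0" and z: "z \<noteq> 0" and \<zeta>: "\<zeta> \<noteq> 0"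
  shows "jacobi_theta q (\<zeta> ^ i * (q ^ n * z)) ^ d =
         (\<zeta> ^ (i * d)) ^ n * ((- z) ^ d) ^ n * q ^ (d * TT n) * jacobi_theta q (\<zeta> ^ i * z) ^ d"
proof -
  have "jacobi_theta q (\<zeta> ^ i * (q ^ n * z)) = jacobi_theta q (q ^ n * (\<zeta> ^ i * z))"
    by (simp add: algebra_simps)
  also have "\<dots> = (- (\<zeta> ^ i * z)) ^ n * q ^ TT n * jacobi_theta q (\<zeta> ^ i * z)"
    unfolding TT_def using q z \<zeta> by (intro theta_iter) auto
  also have "- (\<zeta> ^ i * z) = \<zeta> ^ i * (- z)" by simp
  finally have e: "jacobi_theta q (\<zeta> ^ i * (q ^ n * z)) = (\<zeta> ^ i) ^ n * (- z) ^ n * q ^ TT n * jacobi_theta q (\<zeta> ^ i * z)"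
    by (simp only: power_mult_distrib)
  have p1: "((\<zeta> ^ i) ^ n) ^ d = (\<zeta> ^ (i * d)) ^ n"
    by (simp add: power_mult[symmetric] mult.commute mult.left_commute)
  have p2: "((- z) ^ n) ^ d = ((- z) ^ d) ^ n"
    by (simp add: power_mult[symmetric] mult.commute)
  have p3: "(q ^ TT n) ^ d = q ^ (d * TT n)"
    by (simp add: power_mult[symmetric] mult.commute)
  show ?thesis unfolding e power_mult_distrib p1 p2 p3 ..
qed

lemma relation_poly:
  fixes q z \<zeta> :: complex and t :: nat
    and Lam P Q :: "nat \<Rightarrow> nat \<Rightarrow> complex \<Rightarrow> complex" and Ap Bp :: "nat \<Rightarrow> nat \<Rightarrow> complex poly"
  assumes q: "norm q > 1" and z: "z \<noteq> 0" and t: "prime t"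
    and z1: "\<zeta> ^ t = 1" and prim: "\<forall>j. 0 < j \<and> j < t \<longrightarrow> \<zeta> ^ j \<noteq> 1"
    and h1: "\<And>n i d. i < t \<Longrightarrow> d < t \<Longrightarrow> Lam i d (q ^ n * z) = P i d (q ^ n * z) / Q i d (q ^ n * z)"
    and h1': "\<And>n i d. i < t \<Longrightarrow> d < t \<Longrightarrow> Q i d (q ^ n * z) \<noteq> 0"
    and h2: "\<And>n i d. i < t \<Longrightarrow> d < t \<Longrightarrow> P i d (q ^ n * z) = poly (Ap i d) (q ^ n)"
    and h2': "\<And>n i d. i < t \<Longrightarrow> d < t \<Longrightarrow> Q i d (q ^ n * z) = poly (Bp i d) (q ^ n)"
    and h3: "\<And>n. (\<Sum>d<t. \<Sum>i<t. Lam i d (q ^ n * z) * jacobi_theta q (\<zeta> ^ i * (q ^ n * z)) ^ d) = 0"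
    and h4: "\<And>i w. 0 < i \<Longrightarrow> Lam i 0 w = 0"
    and th: "\<And>i. i < t \<Longrightarrow> jacobi_theta q (\<zeta> ^ i * z) \<noteq> 0"
  shows "\<forall>i<t. \<forall>d<t. (d \<noteq> 0 \<or> i = 0) \<longrightarrow> Ap i d = 0"
proof -
  have t0: "t > 0" using t prime_gt_0_nat by blast
  have q0: "q \<noteq> 0" using q by auto
  have \<zeta>0: "\<zeta> \<noteq> 0"
  proof
    assume "\<zeta> = 0" with z1 t0 show False by (simp add: power_0_left)
  qed
  define S where "S = {..<t} \<times> {..<t}"
  have finS: "finite S" unfolding S_def by simp
  define Pr where "Pr i d = (\<Prod>k\<in>S - {(i, d)}. Bp (fst k) (snd k))" for i d
  define pp where "pp i d = (if d = 0 \<and> i \<noteq> 0 then 0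
      else smult (jacobi_theta q (\<zeta> ^ i * z) ^ d) (Ap i d * Pr i d))" for i d
  have core_hyp: "(\<Sum>d<t. \<Sum>i<t. poly (pp i d) (q ^ n) * (\<zeta> ^ (i * d)) ^ n * ((- z) ^ d) ^ n * q ^ (d * TT n)) = 0" for n
  proof -
    define Pall where "Pall = (\<Prod>k\<in>S. poly (Bp (fst k) (snd k)) (q ^ n))"
    have "0 = Pall * (\<Sum>d<t. \<Sum>i<t. Lam i d (q ^ n * z) * jacobi_theta q (\<zeta> ^ i * (q ^ n * z)) ^ d)"
      using h3[of n] by simp
    also have "\<dots> = (\<Sum>d<t. \<Sum>i<t. Pall * (Lam i d (q ^ n * z) * jacobi_theta q (\<zeta> ^ i * (q ^ n * z)) ^ d))"
      by (simp add: sum_distrib_left)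
    also have "\<dots> = (\<Sum>d<t. \<Sum>i<t. poly (pp i d) (q ^ n) * (\<zeta> ^ (i * d)) ^ n * ((- z) ^ d) ^ n * q ^ (d * TT n))"
    proof (intro sum.cong refl)
      fix d i assume d: "d \<in> {..<t}" and i: "i \<in> {..<t}"
      show "Pall * (Lam i d (q ^ n * z) * jacobi_theta q (\<zeta> ^ i * (q ^ n * z)) ^ d) =
            poly (pp i d) (q ^ n) * (\<zeta> ^ (i * d)) ^ n * ((- z) ^ d) ^ n * q ^ (d * TT n)"
      proof (cases "d = 0 \<and> i \<noteq> 0")
        case True then show ?thesis using h4 by (simp add: pp_def)
      next
        case False
        have mem: "(i, d) \<in> S" using d i unfolding S_def by auto
        have "Pall = poly (Bp i d) (q ^ n) * poly (Pr i d) (q ^ n)"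
          unfolding Pall_def Pr_def poly_prod using prod.remove[OF finS mem, of "\<lambda>k. poly (Bp (fst k) (snd k)) (q ^ n)"] by simp
        note PallE = this
        have L: "Lam i d (q ^ n * z) * Q i d (q ^ n * z) = P i d (q ^ n * z)"
          using h1[of i d n] h1'[of i d n] d i by simp
        have pl: "Pall * Lam i d (q ^ n * z) = poly (Ap i d) (q ^ n) * poly (Pr i d) (q ^ n)"
        proof -
          have "Pall * Lam i d (q ^ n * z) = poly (Pr i d) (q ^ n) * (Lam i d (q ^ n * z) * poly (Bp i d) (q ^ n))"
            unfolding PallE by (simp only: mult_ac)
          also have "\<dots> = poly (Pr i d) (q ^ n) * P i d (q ^ n * z)"
            using L h2'[of i d n] d i by simp
          also have "\<dots> = poly (Ap i d) (q ^ n) * poly (Pr i d) (q ^ n)"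
          proof -
            have "P i d (q ^ n * z) = poly (Ap i d) (q ^ n)" using h2[of i d n] d i by simp
            thus ?thesis by (simp only: mult.commute)
          qed
          finally show ?thesis .
        qed
        have ppv: "poly (pp i d) (q ^ n) = jacobi_theta q (\<zeta> ^ i * z) ^ d * (poly (Ap i d) (q ^ n) * poly (Pr i d) (q ^ n))"
        proof -
          have "pp i d = smult (jacobi_theta q (\<zeta> ^ i * z) ^ d) (Ap i d * Pr i d)"
            unfolding pp_def using False by (rule if_not_P)
          thus ?thesis by simp
        qed
        have "Pall * (Lam i d (q ^ n * z) * jacobi_theta q (\<zeta> ^ i * (q ^ n * z)) ^ d) =
              (Pall * Lam i d (q ^ n * z)) * ((\<zeta> ^ (i * d)) ^ n * ((- z) ^ d) ^ n * q ^ (d * TT n) * jacobi_theta q (\<zeta> ^ i * z) ^ d)"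
          unfolding theta_pow_iter[OF q0 z \<zeta>0] by (simp only: mult.assoc)
        also have "\<dots> = poly (pp i d) (q ^ n) * (\<zeta> ^ (i * d)) ^ n * ((- z) ^ d) ^ n * q ^ (d * TT n)"
          unfolding pl ppv by (simp only: mult_ac)
        finally show ?thesis .
      qed
    qed
    finally show ?thesis by simp
  qed
  have pp0: "pp i 0 = 0" if "0 < i" for i using that by (simp add: pp_def)
  have all0: "\<forall>d<t. \<forall>i<t. pp i d = 0"
    by (rule core[OF q z t z1 prim pp0 core_hyp])
  show ?thesis
  proof (intro allI impI)
    fix i d assume i: "i < t" and d: "d < t" and nd: "d \<noteq> 0 \<or> i = 0"
    have Bnz: "Bp (fst k) (snd k) \<noteq> 0" if "k \<in> S" for k
    proof
      assume "Bp (fst k) (snd k) = 0"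
      hence "Q (fst k) (snd k) (q ^ 0 * z) = 0" using h2'[of "fst k" "snd k" 0] that unfolding S_def by auto
      thus False using h1'[of "fst k" "snd k" 0] that unfolding S_def by auto
    qed
    have "Pr i d \<noteq> 0" unfolding Pr_def using Bnz finS by (subst prod_zero_iff) auto
    moreover have "jacobi_theta q (\<zeta> ^ i * z) ^ d \<noteq> 0" using th[OF i] by simp
    moreover have "smult (jacobi_theta q (\<zeta> ^ i * z) ^ d) (Ap i d * Pr i d) = 0"
    proof -
      have "\<not> (d = 0 \<and> i \<noteq> 0)" using nd by auto
      hence "pp i d = smult (jacobi_theta q (\<zeta> ^ i * z) ^ d) (Ap i d * Pr i d)"
        unfolding pp_def by (rule if_not_P)
      moreover have "pp i d = 0" using all0 i d by blast
      ultimately show ?thesis by simp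
    qed
    ultimately show "Ap i d = 0" by auto
  qed
qed

definition cc :: "(complex \<Rightarrow> bool) \<Rightarrow> bool" where
  "cc P \<longleftrightarrow> countable {z. z \<noteq> 0 \<and> \<not> P z}"

lemma ae_cc: "(\<forall>\<^sub>\<approx>z\<in>(-{0}). P z) \<Longrightarrow> cc P"
proof -
  assume "\<forall>\<^sub>\<approx>z\<in>(-{0}). P z"
  hence "{x. \<not> P x} sparse_in (-{0})" by (simp add: eventually_cosparse)
  from sparse_imp_countable[OF open_U this] have "countable (-{0} \<inter> {x. \<not> P x})" .
  moreover have "-{0} \<inter> {x. \<not> P x} = {z. z \<noteq> 0 \<and> \<not> P z}" by auto
  ultimately show ?thesis unfolding cc_def by simp
qed

lemma cc_mono: "cc P \<Longrightarrow> (\<And>z. z \<noteq> 0 \<Longrightarrow> P z \<Longrightarrow> Q z) \<Longrightarrow> cc Q"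
  unfolding cc_def by (erule countable_subset[rotated]) auto

lemma cc_conj: "cc P \<Longrightarrow> cc Q \<Longrightarrow> cc (\<lambda>z. P z \<and> Q z)"
proof -
  assume "cc P" "cc Q"
  hence "countable ({z. z \<noteq> 0 \<and> \<not> P z} \<union> {z. z \<noteq> 0 \<and> \<not> Q z})" unfolding cc_def by simp
  thus ?thesis unfolding cc_def by (rule countable_subset[rotated]) auto
qed

lemma cc_all:
  fixes P :: "'b::countable \<Rightarrow> complex \<Rightarrow> bool"
  shows "(\<And>x. cc (P x)) \<Longrightarrow> cc (\<lambda>z. \<forall>x. P x z)"
proof -
  assume h: "\<And>x. cc (P x)"
  have "countable (\<Union>x. {z. z \<noteq> 0 \<and> \<not> P x z})"
    using h unfolding cc_def by (intro countable_UN) auto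
  thus ?thesis unfolding cc_def by (rule countable_subset[rotated]) auto
qed

lemma cc_imp: "(c \<Longrightarrow> cc P) \<Longrightarrow> cc (\<lambda>z. c \<longrightarrow> P z)"
  unfolding cc_def by (cases c) auto

lemma cc_shift:
  assumes c: "c \<noteq> 0" and P: "cc P"
  shows "cc (\<lambda>z. P (c * z))"
proof -
  have "countable ((\<lambda>y. y / c) ` {z. z \<noteq> 0 \<and> \<not> P z})"
    using P unfolding cc_def by simp
  moreover have "{z. z \<noteq> 0 \<and> \<not> P (c * z)} \<subseteq> (\<lambda>y. y / c) ` {z. z \<noteq> 0 \<and> \<not> P z}"
  proof
    fix z assume "z \<in> {z. z \<noteq> 0 \<and> \<not> P (c * z)}"
    thus "z \<in> (\<lambda>y. y / c) ` {z. z \<noteq> 0 \<and> \<not> P z}"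
      using c by (intro image_eqI[of _ _ "c * z"]) auto
  qed
  ultimately show ?thesis unfolding cc_def by (rule countable_subset[rotated])
qed

lemma cc_ae:
  assumes f: "f meromorphic_on (-{0})" and h: "cc (\<lambda>z. f z = 0)"
  shows "\<forall>\<^sub>\<approx>z\<in>(-{0}). f z = 0"
proof (rule ccontr)
  assume "\<not> (\<forall>\<^sub>\<approx>z\<in>(-{0}). f z = 0)"
  hence "\<forall>\<^sub>\<approx>z\<in>(-{0}). f z \<noteq> 0"
    using meromorphic_imp_constant_or_avoid[OF f open_U connected_U, of 0] by blast
  hence "cc (\<lambda>z. f z \<noteq> 0)" by (rule ae_cc)
  with h have "countable ({z. z \<noteq> 0 \<and> \<not> f z = 0} \<union> {z. z \<noteq> 0 \<and> \<not> f z \<noteq> 0})"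
    unfolding cc_def by simp
  moreover have "{z. z \<noteq> 0 \<and> \<not> f z = 0} \<union> {z. z \<noteq> 0 \<and> \<not> f z \<noteq> 0} = -{0}" by auto
  ultimately have "countable (-{0::complex})" by (metis (no_types) countable_Un_iff)
  hence "countable (insert 0 (-{0::complex}))" by simp
  moreover have "insert 0 (-{0::complex}) = UNIV" by auto
  ultimately show False using uncountable_UNIV_complex by simp
qed

lemma zero_kz: "in_kz q (\<lambda>_. 0)"
proof -
  have c0: "(\<lambda>_. 0) \<in> q_invariant_mero q" and c1: "(\<lambda>_. 1) \<in> q_invariant_mero q"
    unfolding q_invariant_mero_def by (auto intro: always_eventually)
  have ne: "\<not> (\<forall>\<^sub>\<approx>z\<in>(-{0::complex}). False)"
  proof -
    have "(1::complex) \<in> -{0}" by simp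
    hence "-{0::complex} \<noteq> {}" by blast
    thus ?thesis by (simp add: eventually_False)
  qed
  show ?thesis unfolding in_kz_def
    by (rule exI[of _ "\<lambda>_ _. 0"], rule exI[of _ "\<lambda>_ _. 1"], rule exI[of _ 0])
       (use c0 c1 ne in \<open>auto intro: always_eventually\<close>)
qed

lemma sum_split0:
  fixes f :: "nat \<Rightarrow> 'a::comm_monoid_add"
  assumes "t > 0"
  shows "(\<Sum>d<t. f d) = f 0 + (\<Sum>d\<in>{1..t-1}. f d)"
proof -
  have "{..<t} = insert 0 {1..t-1}" using assms by auto
  moreover have "0 \<notin> {1..t-1}" by simp
  ultimately show ?thesis by simp
qed

lemma mero_poly_sum:
  assumes "\<And>m. a m meromorphic_on A"
  shows "(\<lambda>z. \<Sum>m\<le>M. a m z * z ^ m) meromorphic_on A"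
  by (intro meromorphic_intros assms)

theorem theorem5:
  fixes t :: nat and \<zeta> q :: complex
    and lam0 :: "complex \<Rightarrow> complex"
    and lam :: "nat \<Rightarrow> nat \<Rightarrow> complex \<Rightarrow> complex"
  assumes "prime t"
    and "\<zeta> ^ t = 1" and "\<forall>j. 0 < j \<and> j < t \<longrightarrow> \<zeta> ^ j \<noteq> 1"
    and "norm q > 1"
    and "in_kz q lam0"
    and "\<forall>i<t. \<forall>d\<in>{1..t-1}. in_kz q (lam i d)"
    and "\<forall>\<^sub>\<approx>z\<in>(-{0}).
           lam0 z + (\<Sum>d\<in>{1..t-1}. \<Sum>i<t. lam i d z * (jacobi_theta q (\<zeta> ^ i * z)) ^ d) = 0"
  shows "(\<forall>\<^sub>\<approx>z\<in>(-{0}). lam0 z = 0) \<and>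
         (\<forall>i<t. \<forall>d\<in>{1..t-1}. \<forall>\<^sub>\<approx>z\<in>(-{0}). lam i d z = 0)"
proof -
  note t = assms(1) and z1 = assms(2) and prim = assms(3) and q = assms(4)
  have t0: "t > 0" using t prime_gt_0_nat by blast
  have q0: "q \<noteq> 0" using q by auto
  have \<zeta>0: "\<zeta> \<noteq> 0"
  proof
    assume "\<zeta> = 0" with z1 t0 show False by (simp add: power_0_left)
  qed
  define Lam where "Lam i d = (if d = 0 then (if i = 0 then lam0 else (\<lambda>_. 0)) else lam i d)" for i d
  have kz: "in_kz q (Lam i d)" if "i < t" "d < t" for i d
  proof (cases "d = 0")
    case True
    then show ?thesis using assms(5) zero_kz by (cases "i = 0") (auto simp: Lam_def)
  next
    case False
    then show ?thesis using assms(6) that by (auto simp: Lam_def)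
  qed
  define R where "R i d a b m \<longleftrightarrow>
        (\<forall>i. a i \<in> q_invariant_mero q) \<and> (\<forall>i. b i \<in> q_invariant_mero q) \<and>
        \<not> (\<forall>\<^sub>\<approx>z\<in>(-{0}). (\<Sum>i\<le>m. b i z * z ^ i) = 0) \<and>
        (\<forall>\<^sub>\<approx>z\<in>(-{0}). Lam i d z = (\<Sum>i\<le>m. a i z * z ^ i) / (\<Sum>i\<le>m. b i z * z ^ i))"
    for i d and a b :: "nat \<Rightarrow> complex \<Rightarrow> complex" and m
  have "\<forall>k. \<exists>x. (fst k < t \<and> snd k < t \<longrightarrow> R (fst k) (snd k) (fst x) (fst (snd x)) (snd (snd x)))"
  proof
    fix k :: "nat \<times> nat"
    show "\<exists>x. (fst k < t \<and> snd k < t \<longrightarrow> R (fst k) (snd k) (fst x) (fst (snd x)) (snd (snd x)))"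
    proof (cases "fst k < t \<and> snd k < t")
      case True
      then obtain a b m where "R (fst k) (snd k) a b m"
        using kz[of "fst k" "snd k"] unfolding in_kz_def R_def by blast
      then show ?thesis by (intro exI[of _ "(a, b, m)"]) simp
    next
      case False
      then show ?thesis by blast
    qed
  qed
  then obtain FF where FF: "\<And>k. fst k < t \<and> snd k < t \<Longrightarrow> R (fst k) (snd k) (fst (FF k)) (fst (snd (FF k))) (snd (snd (FF k)))"
    by metis
  define a where "a i d = fst (FF (i, d))" for i d
  define b where "b i d = fst (snd (FF (i, d)))" for i d
  define M where "M i d = snd (snd (FF (i, d)))" for i d
  have Rid: "R i d (a i d) (b i d) (M i d)" if "i < t" "d < t" for i d
    using FF[of "(i, d)"] that unfolding a_def b_def M_def by simp
  define P where "P i d z = (\<Sum>m\<le>M i d. a i d m z * z ^ m)" for i d z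
  define Q where "Q i d z = (\<Sum>m\<le>M i d. b i d m z * z ^ m)" for i d z
  have ainv: "a i d m \<in> q_invariant_mero q" "b i d m \<in> q_invariant_mero q" if "i < t" "d < t" for i d m
    using Rid[OF that] unfolding R_def by auto
  have Qnae: "\<not> (\<forall>\<^sub>\<approx>z\<in>(-{0}). Q i d z = 0)" if "i < t" "d < t" for i d
    using Rid[OF that] unfolding R_def Q_def by auto
  have rep: "\<forall>\<^sub>\<approx>z\<in>(-{0}). Lam i d z = P i d z / Q i d z" if "i < t" "d < t" for i d
    using Rid[OF that] unfolding R_def P_def Q_def by auto
  have Pmero: "P i d meromorphic_on (-{0})" if "i < t" "d < t" for i d
    unfolding P_def[abs_def] using ainv[OF that] unfolding q_invariant_mero_def
    by (intro mero_poly_sum) auto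
  have Qmero: "Q i d meromorphic_on (-{0})" if "i < t" "d < t" for i d
    unfolding Q_def[abs_def] using ainv[OF that] unfolding q_invariant_mero_def
    by (intro mero_poly_sum) auto
  have Qae: "\<forall>\<^sub>\<approx>z\<in>(-{0}). Q i d z \<noteq> 0" if "i < t" "d < t" for i d
    using meromorphic_imp_constant_or_avoid[OF Qmero[OF that] open_U connected_U, of 0] Qnae[OF that]
    by blast
  define G1 where "G1 z \<longleftrightarrow> (\<forall>n. lam0 (q ^ n * z) + (\<Sum>d\<in>{1..t-1}. \<Sum>i<t. lam i d (q ^ n * z) *
      (jacobi_theta q (\<zeta> ^ i * (q ^ n * z))) ^ d) = 0)" for z
  define G2 where "G2 z \<longleftrightarrow> (\<forall>n i d m. i < t \<longrightarrow> d < t \<longrightarrow>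
      a i d m (q * (q ^ n * z)) = a i d m (q ^ n * z) \<and> b i d m (q * (q ^ n * z)) = b i d m (q ^ n * z))" for z
  define G3 where "G3 z \<longleftrightarrow> (\<forall>n i d. i < t \<longrightarrow> d < t \<longrightarrow>
      Lam i d (q ^ n * z) = P i d (q ^ n * z) / Q i d (q ^ n * z) \<and> Q i d (q ^ n * z) \<noteq> 0)" for z
  define G5 where "G5 z \<longleftrightarrow> (\<forall>i. i < t \<longrightarrow> jacobi_theta q (\<zeta> ^ i * z) \<noteq> 0)" for z
  have ccG1: "cc G1"
    unfolding G1_def
    by (intro cc_all cc_shift[of "q ^ _"] ae_cc assms(7)) (use q0 in simp)
  have ccG2: "cc G2"
    unfolding G2_def
  proof (intro cc_all cc_imp)
    fix n i d m assume i: "i < t" and d: "d < t"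
    have inv: "\<forall>\<^sub>\<approx>z\<in>(-{0}). f (q * z) = f z" if "f \<in> q_invariant_mero q" for f
      using that unfolding q_invariant_mero_def by auto
    show "cc (\<lambda>z. a i d m (q * (q ^ n * z)) = a i d m (q ^ n * z) \<and> b i d m (q * (q ^ n * z)) = b i d m (q ^ n * z))"
      by (intro cc_conj cc_shift[of "q ^ n"] ae_cc inv ainv i d) (use q0 in simp)+
  qed
  have ccG3: "cc G3"
    unfolding G3_def
  proof (intro cc_all cc_imp)
    fix n i d assume i: "i < t" and d: "d < t"
    show "cc (\<lambda>z. Lam i d (q ^ n * z) = P i d (q ^ n * z) / Q i d (q ^ n * z) \<and> Q i d (q ^ n * z) \<noteq> 0)"
      by (intro cc_conj cc_shift[of "q ^ n"] ae_cc rep Qae i d) (use q0 in simp)+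
  qed
  have ccG5: "cc G5"
    unfolding G5_def
  proof (intro cc_all cc_imp)
    fix i assume i: "i < t"
    show "cc (\<lambda>z. jacobi_theta q (\<zeta> ^ i * z) \<noteq> 0)"
      by (intro cc_shift[of "\<zeta> ^ i"] ae_cc theta_ae_nonzero q) (use \<zeta>0 in simp)
  qed
  have key: "P i d z = 0" if z: "z \<noteq> 0" and g: "G1 z" "G2 z" "G3 z" "G5 z"
     and i: "i < t" and d: "d < t" and nd: "d \<noteq> 0 \<or> i = 0" for z i d
  proof -
    define Ap where "Ap i d = (\<Sum>m\<le>M i d. monom (a i d m z * z ^ m) m)" for i d
    define Bp where "Bp i d = (\<Sum>m\<le>M i d. monom (b i d m z * z ^ m) m)" for i d
    have ainvn: "a i d m (q ^ n * z) = a i d m z \<and> b i d m (q ^ n * z) = b i d m z"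
      if "i < t" "d < t" for i d m n
    proof (induction n)
      case (Suc n)
      have "q ^ Suc n * z = q * (q ^ n * z)" by (simp add: mult.assoc)
      then show ?case using g(2) that Suc unfolding G2_def by metis
    qed simp
    have pw: "(q ^ n * z) ^ m = z ^ m * (q ^ n) ^ m" for n m by (simp add: power_mult_distrib)
    have h2: "P i d (q ^ n * z) = poly (Ap i d) (q ^ n)" if "i < t" "d < t" for n i d
      unfolding P_def Ap_def poly_sum poly_monom using ainvn[OF that]
      by (intro sum.cong refl) (simp add: pw mult.assoc)
    have h2': "Q i d (q ^ n * z) = poly (Bp i d) (q ^ n)" if "i < t" "d < t" for n i d
      unfolding Q_def Bp_def poly_sum poly_monom using ainvn[OF that]
      by (intro sum.cong refl) (simp add: pw mult.assoc)
    have h3: "(\<Sum>d<t. \<Sum>i<t. Lam i d (q ^ n * z) * jacobi_theta q (\<zeta> ^ i * (q ^ n * z)) ^ d) = 0" for n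
    proof -
      have split: "{..<t} = insert 0 {1..t-1}" using t0 by auto
      have s0: "(\<Sum>i<t. Lam i 0 (q ^ n * z) * jacobi_theta q (\<zeta> ^ i * (q ^ n * z)) ^ 0) = lam0 (q ^ n * z)"
      proof -
        have "(\<Sum>i<t. Lam i 0 (q ^ n * z) * jacobi_theta q (\<zeta> ^ i * (q ^ n * z)) ^ 0) =
              (\<Sum>i<t. if i = 0 then lam0 (q ^ n * z) else 0)"
          by (intro sum.cong refl) (simp add: Lam_def)
        also have "\<dots> = lam0 (q ^ n * z)" using t0 by simp
        finally show ?thesis .
      qed
      have s1: "(\<Sum>d\<in>{1..t-1}. \<Sum>i<t. Lam i d (q ^ n * z) * jacobi_theta q (\<zeta> ^ i * (q ^ n * z)) ^ d) =
                (\<Sum>d\<in>{1..t-1}. \<Sum>i<t. lam i d (q ^ n * z) * jacobi_theta q (\<zeta> ^ i * (q ^ n * z)) ^ d)"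
        by (intro sum.cong refl) (simp add: Lam_def)
      have "(\<Sum>d<t. \<Sum>i<t. Lam i d (q ^ n * z) * jacobi_theta q (\<zeta> ^ i * (q ^ n * z)) ^ d) =
            lam0 (q ^ n * z) + (\<Sum>d\<in>{1..t-1}. \<Sum>i<t. lam i d (q ^ n * z) * jacobi_theta q (\<zeta> ^ i * (q ^ n * z)) ^ d)"
        unfolding sum_split0[OF t0, where f="\<lambda>d. \<Sum>i<t. Lam i d (q ^ n * z) * jacobi_theta q (\<zeta> ^ i * (q ^ n * z)) ^ d"] s0 s1 ..
      also have "\<dots> = 0" using g(1) unfolding G1_def by blast
      finally show ?thesis .
    qed
    have h4: "Lam i 0 w = 0" if "0 < i" for i w using that by (simp add: Lam_def)
    have h1: "Lam i d (q ^ n * z) = P i d (q ^ n * z) / Q i d (q ^ n * z)" if "i < t" "d < t" for n i d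
      using g(3) that unfolding G3_def by blast
    have h1': "Q i d (q ^ n * z) \<noteq> 0" if "i < t" "d < t" for n i d
      using g(3) that unfolding G3_def by blast
    have th: "jacobi_theta q (\<zeta> ^ i * z) \<noteq> 0" if "i < t" for i
      using g(4) that unfolding G5_def by blast
    have "\<forall>i<t. \<forall>d<t. (d \<noteq> 0 \<or> i = 0) \<longrightarrow> Ap i d = 0"
      by (rule relation_poly[where Lam=Lam and P=P and Q=Q and Ap=Ap and Bp=Bp,
            OF q z t z1 prim h1 h1' h2 h2' h3 h4 th])
    hence "Ap i d = 0" using i d nd by blast
    thus ?thesis using h2[OF i d, of 0] by simp
  qed
  have Pae: "\<forall>\<^sub>\<approx>z\<in>(-{0}). P i d z = 0" if i: "i < t" and d: "d < t" and nd: "d \<noteq> 0 \<or> i = 0" for i d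
  proof (rule cc_ae[OF Pmero[OF i d]])
    have "cc (\<lambda>z. G1 z \<and> G2 z \<and> G3 z \<and> G5 z)"
      by (intro cc_conj ccG1 ccG2 ccG3 ccG5)
    thus "cc (\<lambda>z. P i d z = 0)"
      by (rule cc_mono) (use key i d nd in blast)
  qed
  have Lae: "\<forall>\<^sub>\<approx>z\<in>(-{0}). Lam i d z = 0" if i: "i < t" and d: "d < t" and nd: "d \<noteq> 0 \<or> i = 0" for i d
    using Pae[OF i d nd] rep[OF i d] by eventually_elim simp
  show ?thesis
  proof
    show "\<forall>\<^sub>\<approx>z\<in>(-{0}). lam0 z = 0" using Lae[of 0 0] t0 by (simp add: Lam_def)
    show "\<forall>i<t. \<forall>d\<in>{1..t-1}. \<forall>\<^sub>\<approx>z\<in>(-{0}). lam i d z = 0"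
    proof (intro allI impI ballI)
      fix i d assume i: "i < t" and d: "d \<in> {1..t-1}"
      have dt: "d < t" and d0: "d \<noteq> 0" using d t0 by auto
      have "\<forall>\<^sub>\<approx>z\<in>(-{0}). Lam i d z = 0" using Lae[OF i dt] d0 by blast
      thus "\<forall>\<^sub>\<approx>z\<in>(-{0}). lam i d z = 0" using d0 by (simp add: Lam_def)
    qed
  qed
qed

end
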